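(* Let $P$ be a finite poset and $t\geq 2$, $n\geq 1$ integers. Suppose $\mathcal{F}\subseteq[t]^n$ is induced $P$-saturated and $i\in[n]$ is not separating for $\mathcal{F}$. Then there exists an induced $P$-saturated family $\mathcal{F}'\subseteq[t]^n$ with $|\mathcal{F}'|=|\mathcal{F}|$ such that $f(i)\in\{1,t\}$ for all $f\in\mathcal{F}'$.
   Context: $[n]=\{1,\dots,n\}$; $[t]^n$ is the set of functions $f:[n]\to[t]$ ordered by $f\leq g$ iff $f(j)\leq g(j)$ for all $j$. An induced copy of $P$ in $\mathcal{F}\subseteq[t]^n$ is an injective map $\phi:P\to\mathcal{F}$ with $\phi(x)\leq\phi(y)$ iff $x\leq_P y$. $\mathcal{F}$ is induced $P$-saturated if it contains no induced copy of $P$ and for every $f\in[t]^n\setminus\mathcal{F}$, $\mathcal{F}\cup\{f\}$ contains an induced copy of $P$. For $f\in[t]^n$, $D_i(f)\in[t]^{n-1}$ is given by $D_i(f)(x)=f(x)$ for $x<i$ and $D_i(f)(x)=f(x+1)$ for $i\leq x\leq n-1$. Coordinate $i$ is separating for $\mathcal{F}$ if there exist distinct $f,f'\in\mathcal{F}$ with $D_i(f)\leq D_i(f')$ and $f(i)>f'(i)$. *)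

theory Defs
  imports Main
begin

text \<open>The grid [t]^n: functions f : nat \<Rightarrow> nat with f j \<in> {1..t} for j \<in> {1..n},
  normalised to 0 outside {1..n} so that each element of [t]^n has a unique representative.\<close>
definition grid :: "nat \<Rightarrow> nat \<Rightarrow> (nat \<Rightarrow> nat) set" where
  "grid t n = {f. (\<forall>j\<in>{1..n}. f j \<in> {1..t}) \<and> (\<forall>j. j \<notin> {1..n} \<longrightarrow> f j = 0)}"

definition grid_le :: "nat \<Rightarrow> (nat \<Rightarrow> nat) \<Rightarrow> (nat \<Rightarrow> nat) \<Rightarrow> bool" where
  "grid_le n f g \<longleftrightarrow> (\<forall>j\<in>{1..n}. f j \<le> g j)"

definition induced_copy :: "nat \<Rightarrow> (nat \<Rightarrow> nat) set \<Rightarrow> ('p::order \<Rightarrow> (nat \<Rightarrow> nat)) \<Rightarrow> bool" where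
  "induced_copy n F \<phi> \<longleftrightarrow> inj \<phi> \<and> range \<phi> \<subseteq> F \<and>
     (\<forall>x y. grid_le n (\<phi> x) (\<phi> y) \<longleftrightarrow> x \<le> y)"

definition contains_induced :: "'p::order itself \<Rightarrow> nat \<Rightarrow> (nat \<Rightarrow> nat) set \<Rightarrow> bool" where
  "contains_induced P n F \<longleftrightarrow> (\<exists>\<phi> :: 'p \<Rightarrow> (nat \<Rightarrow> nat). induced_copy n F \<phi>)"

definition induced_saturated :: "'p::order itself \<Rightarrow> nat \<Rightarrow> nat \<Rightarrow> (nat \<Rightarrow> nat) set \<Rightarrow> bool" where
  "induced_saturated P t n F \<longleftrightarrow> F \<subseteq> grid t n \<and> \<not> contains_induced P n F \<and>
     (\<forall>f \<in> grid t n - F. contains_induced P n (insert f F))"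

definition del_coord :: "nat \<Rightarrow> nat \<Rightarrow> (nat \<Rightarrow> nat) \<Rightarrow> (nat \<Rightarrow> nat)" where
  "del_coord n i f = (\<lambda>x. if 1 \<le> x \<and> x < i then f x
                         else if i \<le> x \<and> x \<le> n - 1 \<and> 1 \<le> x then f (x + 1) else 0)"

definition separating :: "nat \<Rightarrow> nat \<Rightarrow> (nat \<Rightarrow> nat) set \<Rightarrow> bool" where
  "separating n i F \<longleftrightarrow> (\<exists>f\<in>F. \<exists>f'\<in>F. f \<noteq> f' \<and>
     grid_le (n - 1) (del_coord n i f) (del_coord n i f') \<and> f i > f' i)"

end

theory Submission
  imports Defs
begin

definition Dle :: "nat \<Rightarrow> nat \<Rightarrow> (nat \<Rightarrow> nat) \<Rightarrow> (nat \<Rightarrow> nat) \<Rightarrow> bool" where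
  "Dle n i f g \<longleftrightarrow> (\<forall>j\<in>{1..n}. j \<noteq> i \<longrightarrow> f j \<le> g j)"

definition mm :: "nat \<Rightarrow> nat \<Rightarrow> nat" where "mm t v = (if v = 1 then 1 else t)"

definition sq :: "nat \<Rightarrow> nat \<Rightarrow> (nat \<Rightarrow> nat) \<Rightarrow> (nat \<Rightarrow> nat)" where
  "sq t i f = f(i := mm t (f i))"

lemma del_le:
  assumes "i \<in> {1..n}"
  shows "grid_le (n-1) (del_coord n i f) (del_coord n i g) \<longleftrightarrow> Dle n i f g"
proof
  assume H: "grid_le (n-1) (del_coord n i f) (del_coord n i g)"
  show "Dle n i f g" unfolding Dle_def
  proof (intro ballI impI)
    fix j assume j: "j \<in> {1..n}" "j \<noteq> i"
    show "f j \<le> g j"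
    proof (cases "j < i")
      case True
      then have "j \<in> {1..n-1}" using j assms by auto
      then have "del_coord n i f j \<le> del_coord n i g j" using H unfolding grid_le_def by blast
      then show ?thesis using True j unfolding del_coord_def by auto
    next
      case False
      then have "j - 1 \<in> {1..n-1}" "i \<le> j - 1" using j assms by auto
      then have "del_coord n i f (j-1) \<le> del_coord n i g (j-1)" using H unfolding grid_le_def by blast
      moreover have "\<And>h. del_coord n i h (j-1) = h j" using False j assms unfolding del_coord_def by auto
      ultimately show ?thesis by simp
    qed
  qed
next
  assume H: "Dle n i f g"
  show "grid_le (n-1) (del_coord n i f) (del_coord n i g)" unfolding grid_le_def
  proof
    fix x assume x: "x \<in> {1..n-1}"
    show "del_coord n i f x \<le> del_coord n i g x"
    proof (cases "x < i")
      case True then show ?thesis using H x assms unfolding Dle_def del_coord_def by auto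
    next
      case False
      then have "x + 1 \<in> {1..n}" "x + 1 \<noteq> i" using x by auto
      then have "f (x+1) \<le> g (x+1)" using H unfolding Dle_def by blast
      then show ?thesis using False x unfolding del_coord_def by auto
    qed
  qed
qed

lemma grid_le_split:
  assumes "i \<in> {1..n}"
  shows "grid_le n f g \<longleftrightarrow> Dle n i f g \<and> f i \<le> g i"
  using assms unfolding grid_le_def Dle_def by auto

lemma nonsep:
  assumes "\<not> separating n i F" "i \<in> {1..n}" "f \<in> F" "g \<in> F" "Dle n i f g"
  shows "f i \<le> g i"
  using assms del_le[OF assms(2)] unfolding separating_def by (cases "f = g") force+

lemma transfer_copy:
  assumes "inj_on \<psi> S" "\<forall>a\<in>S. \<forall>b\<in>S. grid_le n (\<psi> a) (\<psi> b) \<longleftrightarrow> grid_le n a b"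
    "induced_copy n S \<phi>" "\<psi> ` S \<subseteq> T"
  shows "induced_copy n T (\<psi> \<circ> \<phi>)"
proof -
  have r: "range \<phi> \<subseteq> S" and i: "inj \<phi>" and o: "\<forall>x y. grid_le n (\<phi> x) (\<phi> y) \<longleftrightarrow> x \<le> y"
    using assms(3) unfolding induced_copy_def by auto
  have "inj (\<psi> \<circ> \<phi>)" using i r assms(1) by (meson comp_inj_on inj_on_subset)
  moreover have "range (\<psi> \<circ> \<phi>) \<subseteq> T" using r assms(4) by auto
  moreover have "\<forall>x y. grid_le n ((\<psi> \<circ> \<phi>) x) ((\<psi> \<circ> \<phi>) y) \<longleftrightarrow> x \<le> y"
  proof (intro allI)
    fix x y
    have "\<phi> x \<in> S" "\<phi> y \<in> S" using r by auto
    then have "grid_le n (\<psi> (\<phi> x)) (\<psi> (\<phi> y)) \<longleftrightarrow> grid_le n (\<phi> x) (\<phi> y)" using assms(2) by blast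
    then show "grid_le n ((\<psi> \<circ> \<phi>) x) ((\<psi> \<circ> \<phi>) y) \<longleftrightarrow> x \<le> y" using o by simp
  qed
  ultimately show ?thesis unfolding induced_copy_def by blast
qed

theorem mainTheorem12:
  fixes P :: "'p::{order,finite} itself" and t n i :: nat and F :: "(nat \<Rightarrow> nat) set"
  assumes "t \<ge> 2" and "n \<ge> 1"
    and "induced_saturated P t n F"
    and "i \<in> {1..n}"
    and "\<not> separating n i F"
  shows "\<exists>F'. induced_saturated P t n F' \<and> card F' = card F \<and> (\<forall>f\<in>F'. f i \<in> {1, t})"
proof -
  note ns = nonsep[OF assms(5) assms(4)]
  have Fg: "F \<subseteq> grid t n" and free: "\<not> contains_induced P n F"
    and sat: "\<forall>f \<in> grid t n - F. contains_induced P n (insert f F)"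
    using assms(3) unfolding induced_saturated_def by auto
  have gi: "f i \<in> {1..t}" if "f \<in> grid t n" for f using that assms(4) unfolding grid_def by auto
  have Dsq1: "Dle n i (sq t i f) g = Dle n i f g" for f g unfolding Dle_def sq_def by auto
  have Dsq2: "Dle n i f (sq t i g) = Dle n i f g" for f g unfolding Dle_def sq_def by auto
  have sqi: "sq t i f i = mm t (f i)" for f unfolding sq_def by simp
  have mm_mono: "mm t a \<le> mm t b" if "a \<le> b" "1 \<le> a" for a b
    using that assms(1) unfolding mm_def by auto
  define F' where "F' = sq t i ` F"
  have ord: "grid_le n (sq t i f) (sq t i g) \<longleftrightarrow> grid_le n f g" if "f \<in> F" "g \<in> F" for f g
  proof -
    have "f i \<ge> 1" using gi Fg that by auto
    then show ?thesis
      using ns[OF that] mm_mono[of "f i" "g i"]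
      unfolding grid_le_split[OF assms(4)] Dsq1 Dsq2 sqi by (auto simp: mm_def)
  qed
  have inj: "inj_on (sq t i) F"
  proof
    fix f g assume fg: "f \<in> F" "g \<in> F" "sq t i f = sq t i g"
    then have A: "grid_le n f g" and B: "grid_le n g f" using ord[of f g] ord[of g f] unfolding grid_le_def by auto
    show "f = g"
    proof (rule ext)
      fix j show "f j = g j"
      proof (cases "j \<in> {1..n}")
        case True
        then have "f j \<le> g j" "g j \<le> f j" using A B unfolding grid_le_def by auto
        then show ?thesis by simp
      next
        case False
        have "f \<in> grid t n" "g \<in> grid t n" using fg Fg by auto
        then show ?thesis using False unfolding grid_def by auto
      qed
    qed
  qed
  have F'g: "F' \<subseteq> grid t n"
  proof
    fix g assume "g \<in> F'"
    then obtain f where f: "f \<in> F" "g = sq t i f" unfolding F'_def by auto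
    then show "g \<in> grid t n" using Fg assms(1,4) unfolding grid_def sq_def mm_def by auto
  qed
  have F'free: "\<not> contains_induced P n F'"
  proof
    assume "contains_induced P n F'"
    then obtain \<phi> :: "'p \<Rightarrow> _" where phi: "induced_copy n F' \<phi>" unfolding contains_induced_def by auto
    let ?\<psi> = "inv_into F (sq t i)"
    have "inj_on ?\<psi> F'" unfolding F'_def by (rule inj_on_inv_into) simp
    moreover have "\<forall>a\<in>F'. \<forall>b\<in>F'. grid_le n (?\<psi> a) (?\<psi> b) \<longleftrightarrow> grid_le n a b"
    proof (intro ballI)
      fix a b assume "a \<in> F'" "b \<in> F'"
      then obtain fa fb where fa: "fa \<in> F" "a = sq t i fa" and fb: "fb \<in> F" "b = sq t i fb"
        unfolding F'_def by auto
      have "?\<psi> a = fa" "?\<psi> b = fb" using fa fb inv_into_f_f[OF inj] by auto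
      then show "grid_le n (?\<psi> a) (?\<psi> b) \<longleftrightarrow> grid_le n a b" using ord fa fb by simp
    qed
    moreover have "?\<psi> ` F' \<subseteq> F" unfolding F'_def by (auto intro: inv_into_into)
    ultimately have "induced_copy n F (?\<psi> \<circ> \<phi>)" using transfer_copy phi by blast
    then show False using free unfolding contains_induced_def by blast
  qed
  have F'sat: "contains_induced P n (insert h F')" if h: "h \<in> grid t n - F'" for h
  proof -
    define c where "c = h i"
    have c: "c \<in> {1..t}" using gi h c_def by auto
    define S where "S = {f i | f. f \<in> F \<and> Dle n i h f \<and> f i \<ge> 2}"
    define x where "x = (if c = 1 then 1 else if c = t then (if S = {} then t else Min S)
       else if (\<exists>b\<in>F. Dle n i h b \<and> b i = 1) then 2 else 1)"
    have up: "Dle n i h f \<longrightarrow> (x \<le> f i \<longleftrightarrow> c \<le> mm t (f i))"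
     and lo: "Dle n i f h \<longrightarrow> (f i \<le> x \<longleftrightarrow> mm t (f i) \<le> c)" if f: "f \<in> F" for f
    proof -
      have fi: "f i \<in> {1..t}" using gi Fg f by auto
      have Sb: "S \<subseteq> {2..t}" using gi Fg unfolding S_def by fastforce
      have Sfin: "finite S" using Sb finite_subset by blast
      show "Dle n i h f \<longrightarrow> (x \<le> f i \<longleftrightarrow> c \<le> mm t (f i))"
      proof
        assume D: "Dle n i h f"
        show "x \<le> f i \<longleftrightarrow> c \<le> mm t (f i)"
        proof (cases "c = 1")
          case True then show ?thesis using fi assms(1) unfolding x_def mm_def by auto
        next
          case c1: False
          show ?thesis
          proof (cases "c = t")
            case True
            show ?thesis
            proof (cases "S = {}")
              case True
              then have "f i = 1" using D f fi unfolding S_def by force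
              then show ?thesis using True \<open>c = t\<close> c1 unfolding x_def mm_def by auto
            next
              case False
              have "Min S \<in> S" using Sfin False by simp
              then have m2: "Min S \<ge> 2" using Sb by auto
              have "f i \<ge> 2 \<Longrightarrow> Min S \<le> f i" using D f Sfin unfolding S_def by (auto intro: Min_le)
              then show ?thesis using m2 fi False \<open>c = t\<close> c1 assms(1) unfolding x_def mm_def by auto
            qed
          next
            case ct: False
            show ?thesis using c1 ct c fi D f unfolding x_def mm_def by auto
          qed
        qed
      qed
      show "Dle n i f h \<longrightarrow> (f i \<le> x \<longleftrightarrow> mm t (f i) \<le> c)"
      proof
        assume D: "Dle n i f h"
        show "f i \<le> x \<longleftrightarrow> mm t (f i) \<le> c"
        proof (cases "c = 1")
          case True then show ?thesis using fi assms(1) unfolding x_def mm_def by auto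
        next
          case c1: False
          show ?thesis
          proof (cases "c = t")
            case True
            show ?thesis
            proof (cases "S = {}")
              case True
              then show ?thesis using fi \<open>c = t\<close> c1 assms(1) unfolding x_def mm_def by auto
            next
              case False
              have "Min S \<in> S" using Sfin False by simp
              then obtain b where b: "b \<in> F" "Dle n i h b" "Min S = b i" unfolding S_def by auto
              have "Dle n i f b" using D b(2) unfolding Dle_def by (meson le_trans)
              then have "f i \<le> Min S" using ns[OF f b(1)] b(3) by simp
              then show ?thesis using fi False \<open>c = t\<close> c1 assms(1) unfolding x_def mm_def by auto
            qed
          next
            case ct: False
            show ?thesis
            proof (cases "\<exists>b\<in>F. Dle n i h b \<and> b i = 1")
              case True
              then obtain b where b: "b \<in> F" "Dle n i h b" "b i = 1" by auto
              have "Dle n i f b" using D b(2) unfolding Dle_def by (meson le_trans)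
              then have "f i \<le> 1" using ns[OF f b(1)] b(3) by simp
              then show ?thesis using True c1 ct c fi unfolding x_def mm_def by auto
            next
              case False
              then show ?thesis using c1 ct c fi unfolding x_def mm_def by auto
            qed
          qed
        qed
      qed
    qed
    have x: "x \<in> {1..t}"
    proof -
      have Sb: "S \<subseteq> {2..t}" using gi Fg unfolding S_def by fastforce
      have Sfin: "finite S" using Sb finite_subset by blast
      show ?thesis
      proof (cases "S = {}")
        case True then show ?thesis using assms(1) c unfolding x_def by auto
      next
        case False
        then have "Min S \<in> {2..t}" using Sfin Sb Min_in by blast
        then show ?thesis using assms(1) c False unfolding x_def by auto
      qed
    qed
    define h0 where "h0 = h(i := x)"
    have h0g: "h0 \<in> grid t n" using h x assms(4) unfolding h0_def grid_def by auto
    have hh0: "h = h0(i := c)" unfolding h0_def c_def by auto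
    have Dh0: "Dle n i h0 g = Dle n i h g" "Dle n i g h0 = Dle n i g h" for g
      unfolding Dle_def h0_def by auto
    have h0i: "h0 i = x" unfolding h0_def by simp
    have r1: "grid_le n h0 f \<longleftrightarrow> grid_le n h (sq t i f)" if "f \<in> F" for f
      using up[OF that] unfolding grid_le_split[OF assms(4)] Dh0 Dsq2 sqi h0i c_def by auto
    have r2: "grid_le n f h0 \<longleftrightarrow> grid_le n (sq t i f) h" if "f \<in> F" for f
      using lo[OF that] unfolding grid_le_split[OF assms(4)] Dh0 Dsq1 sqi h0i c_def by auto
    have h0F: "h0 \<notin> F"
    proof
      assume hF: "h0 \<in> F"
      have "Dle n i h h0" "Dle n i h0 h" unfolding Dle_def h0_def by auto
      then have "mm t x = c" using up[OF hF] lo[OF hF] h0i by auto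
      then have "h = sq t i h0" unfolding sq_def hh0 h0i by simp
      then show False using h hF unfolding F'_def by auto
    qed
    obtain \<phi> :: "'p \<Rightarrow> _" where phi: "induced_copy n (insert h0 F) \<phi>"
      using sat h0g h0F unfolding contains_induced_def by auto
    define \<psi> where "\<psi> = (\<lambda>g. if g = h0 then h else sq t i g)"
    have I1: "inj_on \<psi> (insert h0 F)"
      using inj h h0F unfolding \<psi>_def F'_def inj_on_def by auto
    have I2: "\<forall>a\<in>insert h0 F. \<forall>b\<in>insert h0 F. grid_le n (\<psi> a) (\<psi> b) \<longleftrightarrow> grid_le n a b"
      using ord r1 r2 h0F unfolding \<psi>_def by (auto simp: grid_le_def)
    have I3: "\<psi> ` insert h0 F \<subseteq> insert h F'" unfolding \<psi>_def F'_def by auto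
    have "induced_copy n (insert h F') (\<psi> \<circ> \<phi>)" by (rule transfer_copy[OF I1 I2 phi I3])
    then show ?thesis unfolding contains_induced_def by blast
  qed
  have "induced_saturated P t n F'" unfolding induced_saturated_def using F'g F'free F'sat by blast
  moreover have "card F' = card F" unfolding F'_def using inj by (simp add: card_image)
  moreover have "\<forall>f\<in>F'. f i \<in> {1, t}" unfolding F'_def sq_def mm_def by auto
  ultimately show ?thesis by blast
qed

end
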